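(* Let $n,d$ be positive integers. If $n\geq \frac{d^2}{2}$, then $d\in A_n$.
   Context: A walk is a finite sequence $z_0,z_1,\dots,z_l$ of Gaussian integers with $|z_{j+1}-z_j|=1$ for all $0\le j<l$. For natural numbers $n,d$, $n$ is called $d$-avoidable if there exists a walk $(z_j)$ and indices $r,s$ with $z_r-z_s=n$ such that $z_t-z_u\neq d$ for all indices $t,u$. $A_n$ denotes the set of all $d\in\mathbb{N}$ such that $n$ is not $d$-avoidable. *)

theory Defs
  imports Complex_Main
begin

definition gaussian_int :: "complex \<Rightarrow> bool" where
  "gaussian_int z \<longleftrightarrow> Re z \<in> \<int> \<and> Im z \<in> \<int>"

definition is_walk :: "complex list \<Rightarrow> bool" where
  "is_walk zs \<longleftrightarrow> zs \<noteq> [] \<and> (\<forall>z\<in>set zs. gaussian_int z) \<and>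
     (\<forall>j. Suc j < length zs \<longrightarrow> cmod (zs ! Suc j - zs ! j) = 1)"

definition avoidable :: "nat \<Rightarrow> nat \<Rightarrow> bool" where
  "avoidable n d \<longleftrightarrow> (\<exists>zs. is_walk zs \<and>
     (\<exists>r < length zs. \<exists>s < length zs. zs ! r - zs ! s = of_nat n) \<and>
     (\<forall>t < length zs. \<forall>u < length zs. zs ! t - zs ! u \<noteq> of_nat d))"

definition A :: "nat \<Rightarrow> nat set" where
  "A n = {d. 0 < d \<and> \<not> avoidable n d}"

end

theory Submission
  imports Defs "HOL-Complex_Analysis.Complex_Analysis"
begin


lemma arc_chord:
  fixes g :: "real \<Rightarrow> complex" and c :: complex and k :: nat
  assumes arc: "arc g" and c0: "c \<noteq> 0" and k1: "k \<ge> 1"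
    and fin: "pathfinish g - pathstart g = of_nat k * c"
  shows "\<exists>x\<in>path_image g. \<exists>y\<in>path_image g. y - x = c"
proof -
  define L where "L = {z. \<exists>j::int. j \<noteq> 0 \<and> z = of_int j * c}"
  have clL: "closed L"
  proof (rule discrete_imp_closed[of "norm c"])
    show "0 < norm c" using c0 by simp
    show "\<forall>x\<in>L. \<forall>y\<in>L. dist y x < norm c \<longrightarrow> y = x"
    proof (intro ballI impI)
      fix x y assume "x \<in> L" "y \<in> L" and dl: "dist y x < norm c"
      then obtain i j :: int where x: "x = of_int i * c" and y: "y = of_int j * c"
        unfolding L_def by blast
      have "dist y x = norm (of_int (j - i) * c)" using x y
        by (simp add: dist_norm algebra_simps)
      also have "\<dots> = \<bar>of_int (j - i)\<bar> * norm c"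
        by (simp only: norm_mult norm_of_int)
      finally have "\<bar>real_of_int (j - i)\<bar> < 1" using dl c0 by simp
      then have "j = i" by linarith
      then show "y = x" using x y by simp
    qed
  qed
  define S where "S = ({0..1} \<times> {0..1}) \<inter> {p::real\<times>real. fst p \<le> snd p}"
  define f where "f = (\<lambda>p::real\<times>real. g (snd p) - g (fst p))"
  define K where "K = S \<inter> f -` L"
  have pg: "path g" using arc arc_imp_path by blast
  have cg: "continuous_on {0..1} g" using pg path_def by blast
  have clS: "closed S" unfolding S_def
    by (intro closed_Int closed_Times closed_atLeastAtMost) (intro closed_Collect_le continuous_intros)
  have cf: "continuous_on S f" unfolding f_def S_def
    apply (intro continuous_intros)
     apply (rule continuous_on_compose2[OF cg]) apply (intro continuous_intros) apply auto[1]
    apply (rule continuous_on_compose2[OF cg]) apply (intro continuous_intros) apply auto[1]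
    done
  have clK: "closed K" unfolding K_def using continuous_closed_preimage[OF cf clS clL] .
  have cK: "compact K"
  proof -
    have "K \<subseteq> {0..1} \<times> {0..1}" unfolding K_def S_def by auto
    moreover have "compact ({0..1::real} \<times> {0..1::real})" by (intro compact_Times compact_Icc)
    ultimately show ?thesis using clK compact_Int_closed[of "{0..1::real} \<times> {0..1::real}" K]
      by (metis inf.absorb_iff2 inf_commute)
  qed
  have K01: "(0,1) \<in> K"
  proof -
    have "f (0,1) = of_int (int k) * c" using fin by (simp add: f_def pathfinish_def pathstart_def)
    then show ?thesis using k1 unfolding K_def S_def L_def
      by (auto intro!: exI[of _ "int k"])
  qed
  have "continuous_on K (\<lambda>p. snd p - fst p)" by (intro continuous_intros)
  then obtain q where qK: "q \<in> K" and qmin: "\<And>p. p \<in> K \<Longrightarrow> snd q - fst q \<le> snd p - fst p"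
    using continuous_attains_inf[OF cK _] K01 by blast
  define s where "s = fst q"
  define t where "t = snd q"
  obtain j :: int where j0: "j \<noteq> 0" and gj: "g t - g s = of_int j * c"
    using qK unfolding K_def L_def f_def s_def t_def by auto
  have st: "0 \<le> s" "s \<le> t" "t \<le> 1" using qK unfolding K_def S_def s_def t_def by auto
  have min: "\<And>a b. 0 \<le> a \<Longrightarrow> a \<le> b \<Longrightarrow> b \<le> 1 \<Longrightarrow> g b - g a \<in> L \<Longrightarrow> t - s \<le> b - a"
  proof -
    fix a b assume "0 \<le> a" "a \<le> b" "b \<le> 1" "g b - g a \<in> L"
    then have "(a,b) \<in> K" unfolding K_def S_def f_def by auto
    from qmin[OF this] show "t - s \<le> b - a" by (simp add: s_def t_def)
  qed
  have snt: "s \<noteq> t"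
  proof
    assume "s = t" then have "of_int j * c = 0" using gj by simp
    then show False using j0 c0 by simp
  qed
  define p where "p = (\<lambda>x. (2 * of_real pi * \<i> / c) * x) \<circ> subpath s t g"
  define h where "h = exp \<circ> p"
  have pp: "path p" unfolding p_def
    apply (rule path_continuous_image)
     apply (rule path_subpath[OF pg]) using st apply auto[2]
    by (intro continuous_intros)
  have ph: "path h" unfolding h_def
    by (rule path_continuous_image[OF pp]) (intro continuous_intros)
  have wn: "winding_number h 0 = of_int j"
  proof -
    have "pathfinish p - pathstart p = (2 * of_real pi * \<i> / c) * (g t - g s)"
      by (simp add: p_def pathfinish_def pathstart_def subpath_def right_diff_distrib)
    also have "\<dots> = (2 * of_real pi * \<i>) * of_int j" using gj c0 by simp
    finally show ?thesis unfolding h_def using winding_number_compose_exp[OF pp] by simp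
  qed
  have closed: "pathfinish h = pathstart h"
  proof -
    have "p 1 = p 0 + (2 * of_int j * pi) * \<i>"
      using gj c0 by (simp add: p_def subpath_def field_simps)
    then have "exp (p 1) = exp (p 0) * exp ((2 * of_int j * pi) * \<i>)"
      by (simp add: exp_add)
    also have "exp ((2 * of_int j * pi) * \<i>) = 1"
      by (rule exp_integer_2pi) simp
    finally show ?thesis by (simp add: h_def pathfinish_def pathstart_def)
  qed
  have lf: "loop_free h"
    unfolding loop_free_def
  proof (intro ballI impI)
    fix x y :: real assume x: "x \<in> {0..1}" and y: "y \<in> {0..1}" and hxy: "h x = h y"
    define x' where "x' = (t - s) * x + s"
    define y' where "y' = (t - s) * y + s"
    have xx: "(t - s) * x \<le> t - s" "(t - s) * y \<le> t - s" "0 \<le> (t - s) * x" "0 \<le> (t - s) * y"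
      using x y st by (auto intro: mult_left_le)
    have rng: "0 \<le> x'" "x' \<le> 1" "0 \<le> y'" "y' \<le> 1"
      using xx st unfolding x'_def y'_def by linarith+
    obtain m :: int where "p x = p y + (of_int (2 * m) * pi) * \<i>"
      using hxy exp_eq unfolding h_def by auto
    then have e1: "p x - p y = (2 * of_real pi * \<i>) * of_int m" by simp
    have e2: "p x - p y = (2 * of_real pi * \<i> / c) * (g x' - g y')"
      by (simp add: p_def subpath_def x'_def y'_def right_diff_distrib)
    have nz: "(2 * of_real pi * \<i> :: complex) \<noteq> 0" by simp
    have "(2 * of_real pi * \<i>) * ((g x' - g y') / c) = (2 * of_real pi * \<i>) * of_int m"
      using e1 e2 by (simp add: field_simps)
    then have "(g x' - g y') / c = of_int m" using nz by (metis mult_left_cancel)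
    then have gm: "g x' - g y' = of_int m * c" using c0 by (simp add: field_simps)
    show "x = y \<or> x = 0 \<and> y = 1 \<or> x = 1 \<and> y = 0"
    proof (cases "m = 0")
      case True
      then have "g x' = g y'" using gm by simp
      then have "x' = y'" using arc rng unfolding arc_def inj_on_def by auto
      then show ?thesis using snt by (simp add: x'_def y'_def)
    next
      case False
      have "t - s \<le> \<bar>x' - y'\<bar>"
      proof (cases "x' \<le> y'")
        case True
        have "g y' - g x' \<in> L" unfolding L_def using gm False
          by (intro CollectI exI[of _ "-m"]) (simp add: algebra_simps)
        from min[OF _ True _ this] rng True show ?thesis by simp
      next
        case False': False
        have "g x' - g y' \<in> L" unfolding L_def using gm False by auto
        from min[OF _ _ _ this] rng False' show ?thesis by simp
      qed
      moreover have "\<bar>x' - y'\<bar> = (t - s) * \<bar>x - y\<bar>"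
      proof -
        have "x' - y' = (t - s) * (x - y)" by (simp add: x'_def y'_def algebra_simps)
        then show ?thesis using st by (simp add: abs_mult)
      qed
      ultimately have "t - s \<le> (t - s) * \<bar>x - y\<bar>" by simp
      then have "1 \<le> \<bar>x - y\<bar>" using st snt by simp
      then show ?thesis using x y by auto
    qed
  qed
  have sp: "simple_path h" using ph lf simple_path_def by blast
  have "0 \<notin> path_image h" by (auto simp: h_def path_image_def)
  from simple_closed_path_winding_number_cases[OF sp closed this]
  have w: "complex_of_int j \<in> {-1,0,1}" using wn by simp
  have "complex_of_int j = of_int (-1) \<or> complex_of_int j = of_int 0 \<or> complex_of_int j = of_int 1"
    using w by simp
  then have "j = -1 \<or> j = 0 \<or> j = 1" by (simp only: of_int_eq_iff)
  then have "j = 1 \<or> j = -1" using j0 by blast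
  moreover have "g s \<in> path_image g" "g t \<in> path_image g"
    using st by (auto simp: path_image_def)
  ultimately show ?thesis
  proof (elim disjE)
    assume "j = 1" then have "g t - g s = c" using gj by simp
    then show ?thesis using \<open>g s \<in> path_image g\<close> \<open>g t \<in> path_image g\<close> by blast
  next
    assume "j = -1" then have "g s - g t = c" using gj by (simp add: algebra_simps)
    then show ?thesis using \<open>g s \<in> path_image g\<close> \<open>g t \<in> path_image g\<close> by blast
  qed
qed



lemma fl_plus: "(0::real) \<le> u \<Longrightarrow> u \<le> 1 \<Longrightarrow> \<lfloor>of_int x + u\<rfloor> = (if u < 1 then x else x + 1)"
  by (auto intro!: floor_unique)
lemma cl_plus: "(0::real) \<le> u \<Longrightarrow> u \<le> 1 \<Longrightarrow> \<lceil>of_int x + u\<rceil> = (if u = 0 then x else x + 1)"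
  by (auto intro!: ceiling_unique)
lemma fl_minus: "(0::real) \<le> u \<Longrightarrow> u \<le> 1 \<Longrightarrow> \<lfloor>of_int x - u\<rfloor> = (if u = 0 then x else x - 1)"
  by (auto intro!: floor_unique)
lemma cl_minus: "(0::real) \<le> u \<Longrightarrow> u \<le> 1 \<Longrightarrow> \<lceil>of_int x - u\<rceil> = (if u < 1 then x else x - 1)"
  by (auto intro!: ceiling_unique)

lemma seg_row:
  fixes A A' a :: complex
  assumes gA: "gaussian_int A" and e: "A' - A \<in> {1, -1, \<i>, -\<i>}" and a: "a \<in> closed_segment A A'"
    and k: "k \<in> {\<lfloor>Re a\<rfloor>, \<lceil>Re a\<rceil>}"
  shows "\<exists>X\<in>{A,A'}. Re X = of_int k \<and> Im X = of_int \<lfloor>Im a\<rfloor>"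
proof -
  obtain x y :: int where xy: "Re A = of_int x" "Im A = of_int y"
    using gA unfolding gaussian_int_def by (auto elim!: Ints_cases)
  obtain u where u: "0 \<le> u" "u \<le> 1" and au: "a = (1 - u) *\<^sub>R A + u *\<^sub>R A'"
    using a in_segment(1) by blast
  have ra: "Re a = Re A + u * Re (A' - A)" and ia: "Im a = Im A + u * Im (A' - A)"
  proof -
    have "Re a = (1-u)*Re A + u*Re A'" "Im a = (1-u)*Im A + u*Im A'" using au by simp_all
    then show "Re a = Re A + u * Re (A' - A)" "Im a = Im A + u * Im (A' - A)"
      by (simp_all add: algebra_simps)
  qed
  from e consider "A' - A = 1" | "A' - A = -1" | "A' - A = \<i>" | "A' - A = -\<i>" by blast
  then show ?thesis
  proof cases
    case 1
    then have A': "Re A' = of_int (x+1)" "Im A' = of_int y" using xy by (auto simp: complex_eq_iff)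
    have "Re a = of_int x + u" "Im a = of_int y" using ra ia 1 xy by auto
    then show ?thesis using k u A' xy fl_plus[OF u, of x] cl_plus[OF u, of x]
      by (auto split: if_splits)
  next
    case 2
    then have A': "Re A' = of_int (x-1)" "Im A' = of_int y" using xy by (auto simp: complex_eq_iff)
    have "Re a = of_int x - u" "Im a = of_int y" using ra ia 2 xy by auto
    then show ?thesis using k u A' xy fl_minus[OF u, of x] cl_minus[OF u, of x]
      by (auto split: if_splits)
  next
    case 3
    then have A': "Re A' = of_int x" "Im A' = of_int (y+1)" using xy by (auto simp: complex_eq_iff)
    have "Re a = of_int x" "Im a = of_int y + u" using ra ia 3 xy by auto
    then show ?thesis using k u A' xy fl_plus[OF u, of y]
      by (auto split: if_splits)
  next
    case 4
    then have A': "Re A' = of_int x" "Im A' = of_int (y-1)" using xy by (auto simp: complex_eq_iff)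
    have "Re a = of_int x" "Im a = of_int y - u" using ra ia 4 xy by auto
    then show ?thesis using k u A' xy fl_minus[OF u, of y]
      by (auto split: if_splits)
  qed
qed

lemma one_dim:
  fixes ra rb c :: real and d :: int
  assumes "rb - ra = c" "of_int d - 1 < c" "c < of_int d + 1"
  shows "\<exists>x\<in>{\<lfloor>ra\<rfloor>, \<lceil>ra\<rceil>}. \<exists>y\<in>{\<lfloor>rb\<rfloor>, \<lceil>rb\<rceil>}. y - x = d"
proof -
  define x where "x = \<lfloor>ra\<rfloor>"
  define m where "m = \<lfloor>rb\<rfloor> - x"
  have fx: "of_int x \<le> ra" "ra < of_int x + 1" unfolding x_def by linarith+
  have fy: "of_int \<lfloor>rb\<rfloor> \<le> rb" "rb < of_int \<lfloor>rb\<rfloor> + 1" by linarith+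
  have rm: "real_of_int m = of_int \<lfloor>rb\<rfloor> - of_int x" by (simp add: m_def)
  have "real_of_int m < of_int d + 2" "real_of_int m > of_int d - 2"
    using fx fy assms rm by linarith+
  then have "m < d + 2" "m > d - 2" by linarith+
  then consider "m = d" | "m = d - 1" | "m = d + 1" by linarith
  then show ?thesis
  proof cases
    case 1 then show ?thesis unfolding m_def x_def by force
  next
    case 2
    have "real_of_int \<lfloor>rb\<rfloor> = of_int x + of_int d - 1" using 2 unfolding m_def by simp
    then have "rb > of_int \<lfloor>rb\<rfloor>" using fx assms by linarith
    then have "\<lceil>rb\<rceil> = \<lfloor>rb\<rfloor> + 1" by (intro ceiling_unique) linarith+
    then show ?thesis using 2 unfolding m_def x_def by force
  next
    case 3
    have "real_of_int \<lfloor>rb\<rfloor> = of_int x + of_int d + 1" using 3 unfolding m_def by simp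
    then have "ra > of_int x" using fy assms by linarith
    then have "\<lceil>ra\<rceil> = x + 1" by (intro ceiling_unique) (use fx in linarith)+
    then show ?thesis using 3 unfolding m_def x_def by force
  qed
qed

lemma thick:
  fixes A A' B B' a b :: complex and c :: real and d :: int
  assumes "gaussian_int A" "A' - A \<in> {1, -1, \<i>, -\<i>}" "a \<in> closed_segment A A'"
    and "gaussian_int B" "B' - B \<in> {1, -1, \<i>, -\<i>}" "b \<in> closed_segment B B'"
    and bac: "b - a = of_real c" and "of_int d - 1 < c" "c < of_int d + 1"
  shows "\<exists>X\<in>{A,A'}. \<exists>Y\<in>{B,B'}. Y - X = of_int d"
proof -
  have re: "Re b - Re a = c" and im: "Im b = Im a" using bac by (auto simp: complex_eq_iff)
  obtain xa yb where xa: "xa \<in> {\<lfloor>Re a\<rfloor>, \<lceil>Re a\<rceil>}" and yb: "yb \<in> {\<lfloor>Re b\<rfloor>, \<lceil>Re b\<rceil>}"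
    and dy: "yb - xa = d"
    using one_dim[OF re assms(8,9)] by blast
  obtain X where X: "X \<in> {A,A'}" "Re X = of_int xa" "Im X = of_int \<lfloor>Im a\<rfloor>"
    using seg_row[OF assms(1-3) xa] by blast
  obtain Y where Y: "Y \<in> {B,B'}" "Re Y = of_int yb" "Im Y = of_int \<lfloor>Im b\<rfloor>"
    using seg_row[OF assms(4-6) yb] by blast
  have "Y - X = of_int d"
    using X Y im dy by (auto simp: complex_eq_iff)
  then show ?thesis using X Y by blast
qed

lemma step_cases:
  assumes "gaussian_int z" "gaussian_int w" "cmod (w - z) = 1"
  shows "w - z \<in> {1, -1, \<i>, -\<i>}"
proof -
  obtain p q :: int where pq: "Re (w - z) = of_int p" "Im (w - z) = of_int q"
    using assms(1,2) unfolding gaussian_int_def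
    by (metis Ints_cases Ints_diff minus_complex.simps)
  have "(Re (w - z))\<^sup>2 + (Im (w - z))\<^sup>2 = 1"
    using assms(3) unfolding cmod_def by (metis real_sqrt_eq_1_iff)
  then have s: "p * p + q * q = 1" using pq
    by (metis (mono_tags, opaque_lifting) of_int_eq_1_iff of_int_add of_int_mult power2_eq_square)
  have "\<bar>p\<bar> \<le> 1"
  proof (rule ccontr)
    assume "\<not> \<bar>p\<bar> \<le> 1" then have "\<bar>p\<bar> * \<bar>p\<bar> \<ge> 2 * 2" by (intro mult_mono) auto
    moreover have "q * q \<ge> 0" by simp
    ultimately show False using s by (simp add: abs_mult[symmetric])
  qed
  moreover have "\<bar>q\<bar> \<le> 1"
  proof (rule ccontr)
    assume "\<not> \<bar>q\<bar> \<le> 1" then have "\<bar>q\<bar> * \<bar>q\<bar> \<ge> 2 * 2" by (intro mult_mono) auto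
    moreover have "p * p \<ge> 0" by simp
    ultimately show False using s by (simp add: abs_mult[symmetric])
  qed
  ultimately have "p \<in> {-1,0,1}" "q \<in> {-1,0,1}" by auto
  with s have "(p = 1 \<and> q = 0) \<or> (p = -1 \<and> q = 0) \<or> (p = 0 \<and> q = 1) \<or> (p = 0 \<and> q = -1)"
    by auto
  then show ?thesis using pq by (auto simp: complex_eq_iff)
qed



definition segs :: "complex list \<Rightarrow> nat \<Rightarrow> complex set" where
  "segs zs m = (\<Union>j<m. closed_segment (zs!j) (zs!Suc j))"

lemma segs_pc: "1 \<le> m \<Longrightarrow> path_connected (segs zs m)"
proof (induction m)
  case 0 then show ?case by simp
next
  case (Suc m)
  show ?case
  proof (cases "m = 0")
    case True then show ?thesis by (simp add: segs_def lessThan_Suc)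
  next
    case False
    have eq: "segs zs (Suc m) = segs zs m \<union> closed_segment (zs!m) (zs!Suc m)"
      by (auto simp: segs_def lessThan_Suc)
    have "zs!m \<in> segs zs m" using False unfolding segs_def
      by (intro UN_I[of "m - 1"]) auto
    then show ?thesis unfolding eq using Suc False
      by (intro path_connected_Un) auto
  qed
qed

lemma arith_k:
  fixes n d :: nat
  assumes "0 < n" "0 < d" "d * d \<le> 2 * n"
  shows "\<exists>k::nat. k \<ge> 1 \<and> k * (d - 1) < n \<and> n < k * (d + 1)"
proof -
  define q where "q = n div (d+1)"
  define r where "r = n mod (d+1)"
  have n: "n = q * (d+1) + r" unfolding q_def r_def by (metis div_mult_mod_eq)
  have "r < d + 1" unfolding r_def by (rule mod_less_divisor) simp
  then have r: "r \<le> d" by simp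
  have 1: "n < (q+1) * (d+1)" using n r by simp
  have 2: "(q+1) * (d-1) < n"
  proof (rule ccontr)
    assume "\<not> (q+1) * (d-1) < n"
    then have "n \<le> (q+1) * (d-1)" by simp
    then have "int n \<le> int ((q+1) * (d-1))" by (simp only: of_nat_le_iff)
    also have "int ((q+1) * (d-1)) = (int q + 1) * int (d-1)" by (simp only: of_nat_mult of_nat_add of_nat_1)
    also have "int (d - 1) = int d - 1" using assms(2) by simp
    finally have h: "int n \<le> (int q + 1) * (int d - 1)" .
    have ni: "int n = int q * (int d + 1) + int r" using n by (simp add: algebra_simps)
    have h2: "2 * int q + int r + 1 \<le> int d" using h ni
      by (simp add: algebra_simps)
    have "2 * int q * (int d + 1) \<le> (int d - int r - 1) * (int d + 1)"
      by (rule mult_right_mono) (use h2 in auto)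
    moreover have "int r * int d \<ge> int r" using assms(2) by (simp add: mult_le_cancel_left1)
    moreover have "int (d * d) \<le> int (2 * n)" using assms(3) by (simp only: of_nat_le_iff)
    then have "int d * int d \<le> 2 * int n" by simp
    ultimately show False using ni by (simp add: algebra_simps)
  qed
  show ?thesis using 1 2 by (intro exI[of _ "q+1"]) auto
qed

lemma main_lemma:
  fixes n d :: nat
  assumes w: "is_walk zs" and rs: "r < length zs" "s < length zs"
    and diff: "zs!r - zs!s = of_nat n" and n0: "0 < n" and d0: "0 < d" and dn: "d * d \<le> 2 * n"
  shows "\<exists>t<length zs. \<exists>u<length zs. zs!t - zs!u = of_nat d"
proof -
  have gi: "\<And>j. j < length zs \<Longrightarrow> gaussian_int (zs!j)" using w unfolding is_walk_def by auto
  have stp: "\<And>j. Suc j < length zs \<Longrightarrow> zs!Suc j - zs!j \<in> {1, -1, \<i>, -\<i>}"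
    using w gi unfolding is_walk_def by (intro step_cases) auto
  have rsne: "zs!r \<noteq> zs!s" using diff n0 by auto
  then have "r \<noteq> s" by auto
  then have len: "length zs \<ge> 2" using rs by linarith
  define U where "U = segs zs (length zs - 1)"
  have pc: "path_connected U" unfolding U_def using len by (intro segs_pc) auto
  have vin: "\<And>i. i < length zs \<Longrightarrow> zs!i \<in> U"
  proof -
    fix i assume i: "i < length zs"
    show "zs!i \<in> U"
    proof (cases "Suc i < length zs")
      case True then show ?thesis unfolding U_def segs_def by (intro UN_I[of i]) auto
    next
      case False then have "i = length zs - 1" using i by auto
      then obtain i0 where i0: "i = Suc i0" "Suc i0 < length zs" using len i by (cases i) fastforce+
      then show ?thesis unfolding U_def segs_def by (intro UN_I[of i0]) auto
    qed
  qed
  obtain g where g: "arc g" "path_image g \<subseteq> U" "pathstart g = zs!s" "pathfinish g = zs!r"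
    using pc vin rs rsne unfolding path_connected_arcwise by metis
  obtain k :: nat where k: "k \<ge> 1" "k * (d - 1) < n" "n < k * (d + 1)"
    using arith_k[OF n0 d0 dn] by blast
  define c where "c = real n / real k"
  have cb: "of_int (int d) - 1 < c" "c < of_int (int d) + 1"
  proof -
    have kp: "real k > 0" using k by simp
    have "real (k * (d - 1)) < real n" using k(2) by (simp only: of_nat_less_iff)
    moreover have "real (d - 1) = real d - 1" using d0 by (simp add: of_nat_diff)
    then have "real (k * (d - 1)) = real k * (real d - 1)" by simp
    ultimately have "real k * (real d - 1) < real n" by linarith
    then show "of_int (int d) - 1 < c" unfolding c_def using kp by (simp add: field_simps)
    have "real n < real (k * (d + 1))" using k(3) by (simp only: of_nat_less_iff)
    then have "real n < real k * (real d + 1)" by (simp add: algebra_simps)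
    then show "c < of_int (int d) + 1" unfolding c_def using kp by (simp add: field_simps)
  qed
  have c0: "complex_of_real c \<noteq> 0" using n0 k unfolding c_def by simp
  have "pathfinish g - pathstart g = of_nat k * complex_of_real c"
    using g diff k unfolding c_def by (simp add: field_simps)
  from arc_chord[OF g(1) c0 k(1) this] obtain a b where ab: "a \<in> U" "b \<in> U" "b - a = complex_of_real c"
    using g(2) by blast
  obtain j1 where j1: "Suc j1 < length zs" "a \<in> closed_segment (zs!j1) (zs!Suc j1)"
    using ab(1) unfolding U_def segs_def by (auto simp add: less_diff_conv)
  obtain j2 where j2: "Suc j2 < length zs" "b \<in> closed_segment (zs!j2) (zs!Suc j2)"
    using ab(2) unfolding U_def segs_def by (auto simp add: less_diff_conv)
  obtain X Y where XY: "X \<in> {zs!j1, zs!Suc j1}" "Y \<in> {zs!j2, zs!Suc j2}" "Y - X = of_int (int d)"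
    using thick[OF gi stp j1(2) gi stp j2(2) ab(3) cb] j1(1) j2(1) by fastforce
  have "\<exists>u<length zs. X = zs!u" using XY(1) j1(1) Suc_lessD by blast
  moreover have "\<exists>t<length zs. Y = zs!t" using XY(2) j2(1) Suc_lessD by blast
  ultimately show ?thesis using XY(3) by (metis of_int_of_nat_eq)
qed

theorem mainTheorem4:
  fixes n d :: nat
  assumes "0 < n" and "0 < d" and "real n \<ge> (real d)^2 / 2"
  shows "d \<in> A n"
proof -
  have "real (d * d) \<le> real (2 * n)" using assms(3) by (simp add: power2_eq_square)
  then have dn: "d * d \<le> 2 * n" by (simp only: of_nat_le_iff)
  have "\<not> avoidable n d"
  proof
    assume "avoidable n d"
    then obtain zs r s where w: "is_walk zs" and rs: "r < length zs" "s < length zs"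
      and df: "zs!r - zs!s = of_nat n"
      and av: "\<forall>t<length zs. \<forall>u<length zs. zs!t - zs!u \<noteq> of_nat d"
      unfolding avoidable_def by blast
    from main_lemma[OF w rs df assms(1,2) dn] av show False by blast
  qed
  then show ?thesis using assms(2) by (simp add: A_def)
qed


end
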